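(* Let $\Omega$ be an infinite set and let $0<k<j$ be integers. Then every graph automorphism of $\Gamma^\Omega_{j;k}$ is induced by a permutation of $\Omega$.
   Context: $\Gamma^\Omega_{j;k}$ is the graph whose vertices are the $j$-element subsets of $\Omega$, two being adjacent iff their intersection has exactly $k$ elements. *)

theory Defs
  imports Main
begin

definition kset :: "'a set \<Rightarrow> nat \<Rightarrow> 'a set set" where
  "kset \<Omega> j = {A. A \<subseteq> \<Omega> \<and> finite A \<and> card A = j}"

definition gamma_adj :: "nat \<Rightarrow> 'a set \<Rightarrow> 'a set \<Rightarrow> bool" where
  "gamma_adj k A B \<longleftrightarrow> card (A \<inter> B) = k"

definition gamma_aut :: "'a set \<Rightarrow> nat \<Rightarrow> nat \<Rightarrow> ('a set \<Rightarrow> 'a set) \<Rightarrow> bool" where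
  "gamma_aut \<Omega> j k \<sigma> \<longleftrightarrow>
     bij_betw \<sigma> (kset \<Omega> j) (kset \<Omega> j) \<and>
     (\<forall>A\<in>kset \<Omega> j. \<forall>B\<in>kset \<Omega> j. gamma_adj k (\<sigma> A) (\<sigma> B) \<longleftrightarrow> gamma_adj k A B)"

definition induced_by_perm :: "'a set \<Rightarrow> nat \<Rightarrow> ('a set \<Rightarrow> 'a set) \<Rightarrow> bool" where
  "induced_by_perm \<Omega> j \<sigma> \<longleftrightarrow>
     (\<exists>g. bij_betw g \<Omega> \<Omega> \<and> (\<forall>A\<in>kset \<Omega> j. \<sigma> A = g ` A))"

end

theory Submission
  imports Defs "HOL-Library.Nat_Bijection" "HOL-Library.Infinite_Set"
begin

definition SS :: "'a set \<Rightarrow> nat \<Rightarrow> 'a set \<Rightarrow> 'a set set" where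
  "SS \<Omega> n K = {X \<in> kset \<Omega> n. K \<subseteq> X}"

definition star :: "'a set \<Rightarrow> nat \<Rightarrow> nat \<Rightarrow> 'a set set \<Rightarrow> 'a set set" where
  "star \<Omega> n k Q = {X \<in> kset \<Omega> n. infinite {Y\<in>Q. card (X \<inter> Y) = k}}"

definition clique :: "nat \<Rightarrow> 'a set set \<Rightarrow> bool" where
  "clique k Q \<longleftrightarrow> (\<forall>A\<in>Q. \<forall>B\<in>Q. A \<noteq> B \<longrightarrow> card (A \<inter> B) = k)"

lemma ext_lemma:
  assumes "infinite \<Omega>" "K \<subseteq> \<Omega>" "finite K" "card K \<le> n" "finite F"
  shows "\<exists>X. X \<in> kset \<Omega> n \<and> K \<subseteq> X \<and> X \<inter> F \<subseteq> K"
proof -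
  have "infinite (\<Omega> - (K \<union> F))" using assms by simp
  then obtain P where P: "finite P" "card P = n - card K" "P \<subseteq> \<Omega> - (K \<union> F)"
    using infinite_arbitrarily_large by blast
  have "card (K \<union> P) = card K + card P"
    using P assms by (intro card_Un_disjoint) auto
  then show ?thesis using P assms
    by (intro exI[of _ "K \<union> P"]) (auto simp: kset_def)
qed

lemma sunflower_finite:
  assumes "\<forall>Y\<in>Q. \<forall>Y'\<in>Q. Y \<noteq> Y' \<longrightarrow> Y \<inter> Y' \<subseteq> K" "finite X"
  shows "finite {Y\<in>Q. \<not> X \<inter> Y \<subseteq> K}"
proof -
  have "{Y\<in>Q. \<not> X \<inter> Y \<subseteq> K} \<subseteq> (\<Union>x\<in>X. {Y\<in>Q. x \<in> Y \<and> x \<notin> K})" by auto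
  moreover have "finite {Y\<in>Q. x \<in> Y \<and> x \<notin> K}" for x
  proof -
    have "\<forall>Y\<in>{Y\<in>Q. x \<in> Y \<and> x \<notin> K}. \<forall>Y'\<in>{Y\<in>Q. x \<in> Y \<and> x \<notin> K}. Y = Y'"
      using assms(1) by blast
    then show ?thesis
      by (metis (no_types, lifting) finite.simps is_singletonI' is_singleton_the_elem)
  qed
  ultimately show ?thesis using assms(2) by (meson finite_UN_I finite_subset)
qed

lemma star_SS:
  assumes Q: "Q \<subseteq> kset \<Omega> n" "infinite Q" "clique k Q"
    and K: "finite K" "card K = k" "\<forall>Y\<in>Q. K \<subseteq> Y"
  shows "star \<Omega> n k Q = SS \<Omega> n K"
proof -
  have fQ: "finite Y" if "Y \<in> Q" for Y using Q that by (auto simp: kset_def)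
  have pw: "Y \<inter> Y' = K" if "Y \<in> Q" "Y' \<in> Q" "Y \<noteq> Y'" for Y Y'
  proof -
    have "card (Y \<inter> Y') = k" using Q that by (auto simp: clique_def)
    then show ?thesis using K that fQ
      by (metis Int_greatest card_subset_eq finite_Int)
  qed
  have fin: "finite {Y\<in>Q. \<not> X \<inter> Y \<subseteq> K}" if "X \<in> kset \<Omega> n" for X
    using pw that by (intro sunflower_finite) (auto simp: kset_def)
  show ?thesis
  proof
    show "star \<Omega> n k Q \<subseteq> SS \<Omega> n K"
    proof
      fix X assume X: "X \<in> star \<Omega> n k Q"
      then have XV: "X \<in> kset \<Omega> n" and inf: "infinite {Y\<in>Q. card (X \<inter> Y) = k}"
        by (auto simp: star_def)
      have "infinite ({Y\<in>Q. card (X \<inter> Y) = k} - {Y\<in>Q. \<not> X \<inter> Y \<subseteq> K})"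
        using inf fin[OF XV] by simp
      then obtain Y where "Y \<in> {Y\<in>Q. card (X \<inter> Y) = k} - {Y\<in>Q. \<not> X \<inter> Y \<subseteq> K}"
        using infinite_imp_nonempty by blast
      then have Y: "Y \<in> Q" "card (X \<inter> Y) = k" "X \<inter> Y \<subseteq> K" by auto
      then have "X \<inter> Y = K" using K by (intro card_subset_eq) auto
      then show "X \<in> SS \<Omega> n K" using XV by (auto simp: SS_def)
    qed
  next
    show "SS \<Omega> n K \<subseteq> star \<Omega> n k Q"
    proof
      fix X assume X: "X \<in> SS \<Omega> n K"
      then have XV: "X \<in> kset \<Omega> n" and KX: "K \<subseteq> X" by (auto simp: SS_def)
      have "Q - {Y\<in>Q. \<not> X \<inter> Y \<subseteq> K} \<subseteq> {Y\<in>Q. card (X \<inter> Y) = k}"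
      proof
        fix Y assume "Y \<in> Q - {Y\<in>Q. \<not> X \<inter> Y \<subseteq> K}"
        then have "Y \<in> Q" "X \<inter> Y \<subseteq> K" by auto
        then have "X \<inter> Y = K" using KX K by auto
        then show "Y \<in> {Y\<in>Q. card (X \<inter> Y) = k}" using K \<open>Y \<in> Q\<close> by auto
      qed
      moreover have "infinite (Q - {Y\<in>Q. \<not> X \<inter> Y \<subseteq> K})"
        using Q(2) fin[OF XV] by simp
      ultimately show "X \<in> star \<Omega> n k Q" using XV
        by (auto simp: star_def dest: finite_subset)
    qed
  qed
qed

lemma kernel:
  assumes Q: "Q \<subseteq> kset \<Omega> n" "infinite Q" "clique k Q"
  shows "\<exists>K. finite K \<and> card K = k \<and> (\<forall>Y\<in>Q. K \<subseteq> Y)"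
proof -
  have fQ: "finite Y" if "Y \<in> Q" for Y using Q that by (auto simp: kset_def)
  obtain A where A: "A \<in> Q" using Q(2) infinite_imp_nonempty by blast
  define Q1 where "Q1 = Q - {A}"
  have Q1: "infinite Q1" using Q(2) by (simp add: Q1_def)
  have "finite ((\<lambda>Y. A \<inter> Y) ` Q1)"
    by (rule finite_subset[of _ "Pow A"]) (use fQ A in auto)
  from pigeonhole_infinite[OF Q1 this] obtain Y0 where Y0: "Y0 \<in> Q1"
    "infinite {Y\<in>Q1. A \<inter> Y = A \<inter> Y0}" by blast
  define K where "K = A \<inter> Y0"
  define Q' where "Q' = {Y\<in>Q1. A \<inter> Y = K}"
  have Q': "infinite Q'" using Y0 by (simp add: Q'_def K_def)
  have cK: "card K = k" using Q Y0 A by (auto simp: K_def Q1_def clique_def)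
  have fK: "finite K" using fQ A by (simp add: K_def)
  have pw: "\<forall>Y\<in>Q'. \<forall>Y'\<in>Q'. Y \<noteq> Y' \<longrightarrow> Y \<inter> Y' \<subseteq> K"
  proof (intro ballI impI)
    fix Y Y' assume "Y \<in> Q'" "Y' \<in> Q'" "Y \<noteq> Y'"
    then have "card (Y \<inter> Y') = k" "K \<subseteq> Y \<inter> Y'" "Y \<in> Q"
      using Q by (auto simp: Q'_def Q1_def clique_def)
    then have "K = Y \<inter> Y'" using cK fQ by (intro card_subset_eq) auto
    then show "Y \<inter> Y' \<subseteq> K" by simp
  qed
  have "K \<subseteq> C" if C: "C \<in> Q" for C
  proof -
    have "finite {Y\<in>Q'. \<not> C \<inter> Y \<subseteq> K}"
      using pw fQ[OF C] by (intro sunflower_finite)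
    then have "infinite (Q' - {Y\<in>Q'. \<not> C \<inter> Y \<subseteq> K} - {C})" using Q' by simp
    then obtain Y where "Y \<in> Q' - {Y\<in>Q'. \<not> C \<inter> Y \<subseteq> K} - {C}"
      using infinite_imp_nonempty by blast
    then have Y: "Y \<in> Q" "Y \<noteq> C" "C \<inter> Y \<subseteq> K" by (auto simp: Q'_def Q1_def)
    then have "card (C \<inter> Y) = k" using Q C by (auto simp: clique_def)
    then have "C \<inter> Y = K" using Y cK fK by (intro card_subset_eq) auto
    then show ?thesis by auto
  qed
  then show ?thesis using cK fK by blast
qed

lemma exists_sunflower:
  assumes "infinite \<Omega>" "K \<subseteq> \<Omega>" "finite K" "card K = k" "k < n"
  shows "\<exists>Q. Q \<subseteq> kset \<Omega> n \<and> infinite Q \<and> clique k Q \<and> (\<forall>Y\<in>Q. K \<subseteq> Y)"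
proof -
  have "infinite (\<Omega> - K)" using assms by simp
  then obtain f :: "nat \<Rightarrow> 'a" where f: "inj f" "range f \<subseteq> \<Omega> - K"
    using infinite_countable_subset by blast
  define m where "m = n - k"
  define P where "P i = (\<lambda>r. f (prod_encode (i, r))) ` {..<m}" for i
  define Y where "Y i = K \<union> P i" for i
  have hinj: "f (prod_encode (i, r)) = f (prod_encode (i', r')) \<longleftrightarrow> i = i' \<and> r = r'" for i r i' r'
  proof
    assume "f (prod_encode (i, r)) = f (prod_encode (i', r'))"
    then have "prod_encode (i, r) = prod_encode (i', r')" using f(1) by (simp add: inj_eq)
    then show "i = i' \<and> r = r'" by (simp add: prod_encode_eq)
  qed simp
  have cP: "card (P i) = m" for i
    unfolding P_def by (subst card_image) (auto simp: inj_on_def hinj)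
  have PK: "P i \<subseteq> \<Omega> - K" for i using f(2) by (auto simp: P_def)
  have fP: "finite (P i)" for i by (simp add: P_def)
  have PP: "i \<noteq> j \<Longrightarrow> P i \<inter> P j = {}" for i j by (auto simp: P_def hinj)
  have cY: "card (Y i) = n" for i
  proof -
    have "card (Y i) = card K + card (P i)"
      unfolding Y_def using PK fP assms by (intro card_Un_disjoint) auto
    then show ?thesis using cP assms by (simp add: m_def)
  qed
  have YY: "i \<noteq> j \<Longrightarrow> Y i \<inter> Y j = K" for i j
    using PP[of i j] PK[of i] PK[of j] by (auto simp: Y_def)
  have Pne: "P i \<noteq> {}" for i using cP[of i] assms by (auto simp: m_def)
  have "inj Y"
  proof (rule injI)
    fix i j assume "Y i = Y j"
    show "i = j"
    proof (rule ccontr)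
      assume "i \<noteq> j"
      then have "Y i = K" using YY \<open>Y i = Y j\<close> by (metis Int_absorb)
      then show False using Pne[of i] PK[of i] by (auto simp: Y_def)
    qed
  qed
  show ?thesis
  proof (intro exI[of _ "range Y"] conjI)
    show "range Y \<subseteq> kset \<Omega> n"
      using cY PK assms fP by (auto simp: kset_def Y_def)
    show "infinite (range Y)" using \<open>inj Y\<close> by (simp add: range_inj_infinite)
    show "clique k (range Y)" unfolding clique_def
    proof (intro ballI impI)
      fix A B assume "A \<in> range Y" "B \<in> range Y" "A \<noteq> B"
      then obtain i j where "A = Y i" "B = Y j" "i \<noteq> j" by blast
      then show "card (A \<inter> B) = k" using YY assms by simp
    qed
    show "\<forall>Y\<in>range Y. K \<subseteq> Y" by (auto simp: Y_def)
  qed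
qed

lemma SS_sub:
  assumes "infinite \<Omega>" "K \<subseteq> \<Omega>" "finite K" "card K \<le> n"
    and "SS \<Omega> n K \<subseteq> SS \<Omega> n L"
  shows "L \<subseteq> K"
proof
  fix x assume x: "x \<in> L"
  obtain X where X: "X \<in> kset \<Omega> n" "K \<subseteq> X" "X \<inter> {x} \<subseteq> K"
    using ext_lemma[OF assms(1-4), of "{x}"] by auto
  then have "X \<in> SS \<Omega> n L" using assms(5) by (auto simp: SS_def)
  then show "x \<in> K" using X x by (auto simp: SS_def)
qed

lemma aut_inv:
  assumes "gamma_aut \<Omega> n k \<sigma>"
  shows "gamma_aut \<Omega> n k (inv_into (kset \<Omega> n) \<sigma>)"
proof -
  have b: "bij_betw \<sigma> (kset \<Omega> n) (kset \<Omega> n)" and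
    adj: "\<forall>A\<in>kset \<Omega> n. \<forall>B\<in>kset \<Omega> n. gamma_adj k (\<sigma> A) (\<sigma> B) \<longleftrightarrow> gamma_adj k A B"
    using assms by (auto simp: gamma_aut_def)
  have b': "bij_betw (inv_into (kset \<Omega> n) \<sigma>) (kset \<Omega> n) (kset \<Omega> n)"
    using b by (rule bij_betw_inv_into)
  have "gamma_adj k (inv_into (kset \<Omega> n) \<sigma> A) (inv_into (kset \<Omega> n) \<sigma> B) \<longleftrightarrow> gamma_adj k A B"
    if "A \<in> kset \<Omega> n" "B \<in> kset \<Omega> n" for A B
  proof -
    have i: "inv_into (kset \<Omega> n) \<sigma> A \<in> kset \<Omega> n" "inv_into (kset \<Omega> n) \<sigma> B \<in> kset \<Omega> n"
      using b' that by (auto simp: bij_betw_def)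
    have e: "\<sigma> (inv_into (kset \<Omega> n) \<sigma> A) = A" "\<sigma> (inv_into (kset \<Omega> n) \<sigma> B) = B"
      using b that by (auto simp: bij_betw_def intro!: f_inv_into_f)
    have "gamma_adj k (\<sigma> (inv_into (kset \<Omega> n) \<sigma> A)) (\<sigma> (inv_into (kset \<Omega> n) \<sigma> B))
       \<longleftrightarrow> gamma_adj k (inv_into (kset \<Omega> n) \<sigma> A) (inv_into (kset \<Omega> n) \<sigma> B)"
      using adj i by blast
    then show ?thesis using e by simp
  qed
  then show ?thesis using b' by (auto simp: gamma_aut_def)
qed

lemma aut_SS:
  assumes "infinite \<Omega>" "0 < k" "k < n" "gamma_aut \<Omega> n k \<sigma>" "K \<in> kset \<Omega> k"
  shows "\<exists>L\<in>kset \<Omega> k. \<sigma> ` SS \<Omega> n K = SS \<Omega> n L"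
proof -
  let ?V = "kset \<Omega> n"
  have inj: "inj_on \<sigma> ?V" and im: "\<sigma> ` ?V = ?V" and
    adj: "\<And>A B. A \<in> ?V \<Longrightarrow> B \<in> ?V \<Longrightarrow> card (\<sigma> A \<inter> \<sigma> B) = k \<longleftrightarrow> card (A \<inter> B) = k"
    using assms(4) by (auto simp: gamma_aut_def bij_betw_def gamma_adj_def)
  have K: "K \<subseteq> \<Omega>" "finite K" "card K = k" using assms(5) by (auto simp: kset_def)
  obtain Q where Q: "Q \<subseteq> ?V" "infinite Q" "clique k Q" "\<forall>Y\<in>Q. K \<subseteq> Y"
    using exists_sunflower[OF assms(1) K assms(3)] by blast
  have sQ: "star \<Omega> n k Q = SS \<Omega> n K" using star_SS[OF Q(1-3) K(2,3) Q(4)] .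
  have Q2: "\<sigma> ` Q \<subseteq> ?V" using Q(1) im by auto
  have Q2i: "infinite (\<sigma> ` Q)" using Q(1,2) inj by (simp add: finite_image_iff inj_on_subset)
  have Q2c: "clique k (\<sigma> ` Q)" unfolding clique_def
  proof (intro ballI impI)
    fix A B assume "A \<in> \<sigma> ` Q" "B \<in> \<sigma> ` Q" "A \<noteq> B"
    then obtain A0 B0 where "A0 \<in> Q" "B0 \<in> Q" "A = \<sigma> A0" "B = \<sigma> B0" "A0 \<noteq> B0" by auto
    then show "card (A \<inter> B) = k" using Q adj[of A0 B0] by (auto simp: clique_def)
  qed
  obtain L where L: "finite L" "card L = k" "\<forall>Y\<in>\<sigma> ` Q. L \<subseteq> Y"
    using kernel[OF Q2 Q2i Q2c] by blast
  have LO: "L \<subseteq> \<Omega>"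
  proof -
    obtain Y where "Y \<in> \<sigma> ` Q" using Q2i infinite_imp_nonempty by blast
    then have "L \<subseteq> Y" "Y \<subseteq> \<Omega>" using L Q2 by (auto simp: kset_def)
    then show ?thesis by blast
  qed
  have sQ2: "star \<Omega> n k (\<sigma> ` Q) = SS \<Omega> n L" using star_SS[OF Q2 Q2i Q2c L] .
  have key: "\<sigma> X \<in> star \<Omega> n k (\<sigma> ` Q) \<longleftrightarrow> X \<in> star \<Omega> n k Q" if X: "X \<in> ?V" for X
  proof -
    have "{Y\<in>\<sigma> ` Q. card (\<sigma> X \<inter> Y) = k} = \<sigma> ` {Y\<in>Q. card (X \<inter> Y) = k}"
    proof (rule set_eqI)
      fix Z show "Z \<in> {Y\<in>\<sigma> ` Q. card (\<sigma> X \<inter> Y) = k} \<longleftrightarrow> Z \<in> \<sigma> ` {Y\<in>Q. card (X \<inter> Y) = k}"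
      proof
        assume "Z \<in> {Y\<in>\<sigma> ` Q. card (\<sigma> X \<inter> Y) = k}"
        then obtain Y where Y: "Y \<in> Q" "Z = \<sigma> Y" "card (\<sigma> X \<inter> \<sigma> Y) = k" by auto
        then have "card (X \<inter> Y) = k" using adj[of X Y] X Q(1) by auto
        then show "Z \<in> \<sigma> ` {Y\<in>Q. card (X \<inter> Y) = k}" using Y by auto
      next
        assume "Z \<in> \<sigma> ` {Y\<in>Q. card (X \<inter> Y) = k}"
        then obtain Y where Y: "Y \<in> Q" "Z = \<sigma> Y" "card (X \<inter> Y) = k" by auto
        then have "card (\<sigma> X \<inter> \<sigma> Y) = k" using adj[of X Y] X Q(1) by auto
        then show "Z \<in> {Y\<in>\<sigma> ` Q. card (\<sigma> X \<inter> Y) = k}" using Y by auto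
      qed
    qed
    moreover have "finite (\<sigma> ` {Y\<in>Q. card (X \<inter> Y) = k}) \<longleftrightarrow> finite {Y\<in>Q. card (X \<inter> Y) = k}"
      using inj Q(1) by (intro finite_image_iff) (auto intro: inj_on_subset)
    moreover have "\<sigma> X \<in> ?V" using X im by auto
    ultimately show ?thesis using X unfolding star_def by simp
  qed
  have "\<sigma> ` star \<Omega> n k Q = star \<Omega> n k (\<sigma> ` Q)"
  proof
    show "\<sigma> ` star \<Omega> n k Q \<subseteq> star \<Omega> n k (\<sigma> ` Q)"
    proof
      fix Z assume "Z \<in> \<sigma> ` star \<Omega> n k Q"
      then obtain X where X: "X \<in> star \<Omega> n k Q" "Z = \<sigma> X" by blast
      then have "X \<in> ?V" unfolding star_def by blast
      then show "Z \<in> star \<Omega> n k (\<sigma> ` Q)" using key X by blast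
    qed
    show "star \<Omega> n k (\<sigma> ` Q) \<subseteq> \<sigma> ` star \<Omega> n k Q"
    proof
      fix Z assume Z: "Z \<in> star \<Omega> n k (\<sigma> ` Q)"
      then have "Z \<in> ?V" by (simp add: star_def)
      then obtain X where "X \<in> ?V" "Z = \<sigma> X" using im by (metis imageE)
      then show "Z \<in> \<sigma> ` star \<Omega> n k Q" using key Z by blast
    qed
  qed
  then have "\<sigma> ` SS \<Omega> n K = SS \<Omega> n L" using sQ sQ2 by simp
  moreover have "L \<in> kset \<Omega> k" using L LO by (simp add: kset_def)
  ultimately show ?thesis by blast
qed

lemma tau_exists:
  assumes "infinite \<Omega>" "0 < k" "k < n" "gamma_aut \<Omega> n k \<sigma>"
  obtains \<tau> where "\<forall>K\<in>kset \<Omega> k. \<tau> K \<in> kset \<Omega> k" "inj_on \<tau> (kset \<Omega> k)"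
    "\<tau> ` kset \<Omega> k = kset \<Omega> k"
    "\<forall>K\<in>kset \<Omega> k. \<forall>X\<in>kset \<Omega> n. K \<subseteq> X \<longleftrightarrow> \<tau> K \<subseteq> \<sigma> X"
proof -
  let ?V = "kset \<Omega> n"
  have inj: "inj_on \<sigma> ?V" and im: "\<sigma> ` ?V = ?V"
    using assms(4) by (auto simp: gamma_aut_def bij_betw_def)
  define \<tau> where "\<tau> K = (SOME L. L \<in> kset \<Omega> k \<and> \<sigma> ` SS \<Omega> n K = SS \<Omega> n L)" for K
  have t: "\<tau> K \<in> kset \<Omega> k \<and> \<sigma> ` SS \<Omega> n K = SS \<Omega> n (\<tau> K)" if "K \<in> kset \<Omega> k" for K
  proof -
    have "\<exists>L. L \<in> kset \<Omega> k \<and> \<sigma> ` SS \<Omega> n K = SS \<Omega> n L" using aut_SS[OF assms that] by blast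
    then show ?thesis unfolding \<tau>_def by (rule someI_ex)
  qed
  have SSeq: "K = L" if "K \<in> kset \<Omega> k" "L \<in> kset \<Omega> k" "SS \<Omega> n K = SS \<Omega> n L" for K L
  proof -
    have K: "K \<subseteq> \<Omega>" "finite K" "card K \<le> n" and L: "L \<subseteq> \<Omega>" "finite L" "card L \<le> n"
      using that(1,2) assms(3) by (auto simp: kset_def)
    have "L \<subseteq> K" using SS_sub[OF assms(1) K] that(3) by blast
    moreover have "K \<subseteq> L" using SS_sub[OF assms(1) L] that(3) by blast
    ultimately show ?thesis by blast
  qed
  have SSV: "SS \<Omega> n K \<subseteq> ?V" for K by (auto simp: SS_def)
  have tinj: "inj_on \<tau> (kset \<Omega> k)"
  proof (rule inj_onI)
    fix K L assume KL: "K \<in> kset \<Omega> k" "L \<in> kset \<Omega> k" "\<tau> K = \<tau> L"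
    then have "\<sigma> ` SS \<Omega> n K = \<sigma> ` SS \<Omega> n L" using t[OF KL(1)] t[OF KL(2)] by simp
    then have "SS \<Omega> n K = SS \<Omega> n L" using inj_on_image_eq_iff[OF inj SSV SSV] by simp
    then show "K = L" by (rule SSeq[OF KL(1,2)])
  qed
  have tim: "\<tau> ` kset \<Omega> k = kset \<Omega> k"
  proof
    show "\<tau> ` kset \<Omega> k \<subseteq> kset \<Omega> k" using t by blast
    show "kset \<Omega> k \<subseteq> \<tau> ` kset \<Omega> k"
    proof
      fix L assume L: "L \<in> kset \<Omega> k"
      obtain M where M: "M \<in> kset \<Omega> k" "inv_into ?V \<sigma> ` SS \<Omega> n L = SS \<Omega> n M"
        using aut_SS[OF assms(1-3) aut_inv[OF assms(4)] L] by blast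
      have "\<sigma> ` SS \<Omega> n M = SS \<Omega> n L"
        using image_inv_into_cancel[OF im SSV[of L]] M(2) by simp
      then have "SS \<Omega> n (\<tau> M) = SS \<Omega> n L" using t[OF M(1)] by simp
      then have "\<tau> M = L" using SSeq t[OF M(1)] L by simp
      then show "L \<in> \<tau> ` kset \<Omega> k" using M(1) by blast
    qed
  qed
  have tiff: "\<forall>K\<in>kset \<Omega> k. \<forall>X\<in>?V. K \<subseteq> X \<longleftrightarrow> \<tau> K \<subseteq> \<sigma> X"
  proof (intro ballI)
    fix K X assume K: "K \<in> kset \<Omega> k" and X: "X \<in> ?V"
    have "K \<subseteq> X \<longleftrightarrow> X \<in> SS \<Omega> n K" using X by (simp add: SS_def)
    also have "\<dots> \<longleftrightarrow> \<sigma> X \<in> \<sigma> ` SS \<Omega> n K" using inj X SSV by (simp add: inj_on_image_mem_iff)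
    also have "\<dots> \<longleftrightarrow> \<sigma> X \<in> SS \<Omega> n (\<tau> K)" using t[OF K] by simp
    also have "\<dots> \<longleftrightarrow> \<tau> K \<subseteq> \<sigma> X" using X im by (auto simp: SS_def)
    finally show "K \<subseteq> X \<longleftrightarrow> \<tau> K \<subseteq> \<sigma> X" .
  qed
  show ?thesis by (rule that) (use t tinj tim tiff in auto)
qed

lemma binom_strict:
  assumes "0 < k" "k \<le> b" "a < b"
  shows "a choose k < b choose k"
proof -
  obtain b' where b: "b = Suc b'" using assms by (cases b) auto
  obtain k' where k: "k = Suc k'" using assms by (cases k) auto
  have "a choose k \<le> b' choose k" using assms b by (intro binomial_right_mono) simp
  moreover have "0 < b' choose k'" using assms b k by simp
  moreover have "b choose k = (b' choose k') + (b' choose k)" using b k by simp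
  ultimately show ?thesis by linarith
qed

lemma count_n1:
  assumes "infinite \<Omega>" "0 < k" "k < n" "gamma_aut \<Omega> n k \<sigma>"
    and A: "A \<in> kset \<Omega> n" and B: "B \<in> kset \<Omega> n" and AB: "card (A \<inter> B) = n - 1"
  shows "card (\<sigma> A \<inter> \<sigma> B) = n - 1"
proof -
  let ?V = "kset \<Omega> n"
  have inj: "inj_on \<sigma> ?V" and im: "\<sigma> ` ?V = ?V"
    using assms(4) by (auto simp: gamma_aut_def bij_betw_def)
  obtain \<tau> where t1: "\<forall>K\<in>kset \<Omega> k. \<tau> K \<in> kset \<Omega> k" and t2: "inj_on \<tau> (kset \<Omega> k)"
    and t4: "\<forall>K\<in>kset \<Omega> k. \<forall>X\<in>?V. K \<subseteq> X \<longleftrightarrow> \<tau> K \<subseteq> \<sigma> X"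
    using tau_exists[OF assms(1-4)] by metis
  have sA: "\<sigma> A \<in> ?V" and sB: "\<sigma> B \<in> ?V" using A B im by auto
  have fA: "finite A" "A \<subseteq> \<Omega>" "card A = n" using A by (auto simp: kset_def)
  have fsA: "finite (\<sigma> A)" "card (\<sigma> A) = n" using sA by (auto simp: kset_def)
  have fsB: "finite (\<sigma> B)" "card (\<sigma> B) = n" using sB by (auto simp: kset_def)
  define T where "T = {K. K \<subseteq> A \<inter> B \<and> card K = k}"
  define T' where "T' = {K. K \<subseteq> \<sigma> A \<inter> \<sigma> B \<and> card K = k}"
  have Tk: "T \<subseteq> kset \<Omega> k" using fA by (auto simp: T_def kset_def intro: finite_subset)
  have "\<tau> ` T \<subseteq> T'"
  proof
    fix L assume "L \<in> \<tau> ` T"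
    then obtain K where K: "K \<in> T" "L = \<tau> K" by blast
    then have "K \<in> kset \<Omega> k" using Tk by blast
    moreover have "K \<subseteq> A" "K \<subseteq> B" using K by (auto simp: T_def)
    ultimately have "\<tau> K \<subseteq> \<sigma> A" "\<tau> K \<subseteq> \<sigma> B" "\<tau> K \<in> kset \<Omega> k"
      using t4 t1 A B by blast+
    then have "\<tau> K \<subseteq> \<sigma> A" "\<tau> K \<subseteq> \<sigma> B" "card (\<tau> K) = k"
      by (auto simp: kset_def)
    then show "L \<in> T'" using K by (simp add: T'_def)
  qed
  moreover have "finite T'"
    by (rule finite_subset[of _ "Pow (\<sigma> A)"]) (use fsA in \<open>auto simp: T'_def\<close>)
  moreover have "inj_on \<tau> T" using t2 Tk by (rule inj_on_subset)
  ultimately have le: "card T \<le> card T'" by (intro card_inj_on_le)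
  have "card T = card (A \<inter> B) choose k" unfolding T_def by (rule n_subsets) (use fA in simp)
  then have cT: "card T = (n - 1) choose k" using AB by simp
  define c where "c = card (\<sigma> A \<inter> \<sigma> B)"
  have cT': "card T' = c choose k" unfolding T'_def c_def by (rule n_subsets) (use fsA in simp)
  have "A \<noteq> B" using AB fA assms(3) by auto
  then have "\<sigma> A \<noteq> \<sigma> B" using inj A B by (meson inj_on_eq_iff)
  have "c < n"
  proof (rule ccontr)
    assume "\<not> c < n"
    then have "card (\<sigma> A \<inter> \<sigma> B) = card (\<sigma> A)"
      using fsA card_mono[OF fsA(1), of "\<sigma> A \<inter> \<sigma> B"] by (simp add: c_def)
    then have "\<sigma> A \<inter> \<sigma> B = \<sigma> A" using fsA by (intro card_subset_eq) auto
    then have "\<sigma> A \<subseteq> \<sigma> B" by blast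
    then have "\<sigma> A = \<sigma> B" using fsA fsB by (intro card_subset_eq) auto
    then show False using \<open>\<sigma> A \<noteq> \<sigma> B\<close> by simp
  qed
  show ?thesis
  proof (rule ccontr)
    assume "card (\<sigma> A \<inter> \<sigma> B) \<noteq> n - 1"
    then have "c < n - 1" using \<open>c < n\<close> by (simp add: c_def)
    then have "c choose k < (n - 1) choose k" using assms(2,3) by (intro binom_strict) auto
    then show False using le cT cT' by simp
  qed
qed

lemma preserve_J:
  assumes "infinite \<Omega>" "0 < k" "k < n" "gamma_aut \<Omega> n k \<sigma>"
  shows "gamma_aut \<Omega> n (n - 1) \<sigma>"
proof -
  let ?V = "kset \<Omega> n"
  let ?s = "inv_into ?V \<sigma>"
  have b: "bij_betw \<sigma> ?V ?V" using assms(4) by (simp add: gamma_aut_def)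
  then have inj: "inj_on \<sigma> ?V" and im: "\<sigma> ` ?V = ?V" by (auto simp: bij_betw_def)
  have "card (\<sigma> A \<inter> \<sigma> B) = n - 1 \<longleftrightarrow> card (A \<inter> B) = n - 1" if A: "A \<in> ?V" and B: "B \<in> ?V" for A B
  proof
    assume "card (A \<inter> B) = n - 1"
    then show "card (\<sigma> A \<inter> \<sigma> B) = n - 1" using count_n1[OF assms A B] by simp
  next
    assume h: "card (\<sigma> A \<inter> \<sigma> B) = n - 1"
    have "\<sigma> A \<in> ?V" "\<sigma> B \<in> ?V" using A B im by auto
    from count_n1[OF assms(1-3) aut_inv[OF assms(4)] this h]
    show "card (A \<inter> B) = n - 1" using inj A B by simp
  qed
  then show ?thesis using b by (simp add: gamma_aut_def gamma_adj_def)
qed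

lemma adjJ:
  assumes "K \<in> kset \<Omega> m" "L \<in> kset \<Omega> m" "1 \<le> m"
  shows "card (K \<inter> L) = m - 1 \<longleftrightarrow> K \<noteq> L \<and> (\<exists>X\<in>kset \<Omega> (Suc m). K \<union> L \<subseteq> X)"
proof -
  have K: "finite K" "card K = m" "K \<subseteq> \<Omega>" and L: "finite L" "card L = m" "L \<subseteq> \<Omega>"
    using assms by (auto simp: kset_def)
  have ui: "card K + card L = card (K \<union> L) + card (K \<inter> L)" using K(1) L(1) by (rule card_Un_Int)
  show ?thesis
  proof
    assume h: "card (K \<inter> L) = m - 1"
    have "K \<noteq> L"
    proof
      assume "K = L" then have "card (K \<inter> L) = m" using K by simp
      then show False using h assms(3) by linarith
    qed
    moreover have "card (K \<union> L) = Suc m" using ui h K(2) L(2) assms(3) by linarith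
    then have "K \<union> L \<in> kset \<Omega> (Suc m)" using K L by (simp add: kset_def)
    ultimately show "K \<noteq> L \<and> (\<exists>X\<in>kset \<Omega> (Suc m). K \<union> L \<subseteq> X)" by blast
  next
    assume h: "K \<noteq> L \<and> (\<exists>X\<in>kset \<Omega> (Suc m). K \<union> L \<subseteq> X)"
    then obtain X where X: "X \<in> kset \<Omega> (Suc m)" "K \<union> L \<subseteq> X" by blast
    have fX: "finite X" "card X = Suc m" using X(1) by (auto simp: kset_def)
    have c1: "card (K \<union> L) \<le> Suc m" using card_mono[OF fX(1) X(2)] fX(2) by simp
    have c2: "card (K \<inter> L) \<noteq> m"
    proof
      assume c: "card (K \<inter> L) = m"
      have "K \<inter> L = K" using K c by (intro card_subset_eq) auto
      moreover have "K \<inter> L = L" using L c by (intro card_subset_eq) auto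
      ultimately show False using h by simp
    qed
    have c3: "card (K \<inter> L) \<le> m" using card_mono[OF K(1), of "K \<inter> L"] K(2) by simp
    show "card (K \<inter> L) = m - 1" using ui K(2) L(2) c1 c2 c3 by linarith
  qed
qed

lemma final_step:
  assumes "2 \<le> n" "bij_betw g \<Omega> \<Omega>" "X \<in> kset \<Omega> n" "\<sigma> X \<in> kset \<Omega> n"
    and "\<And>K. K \<in> kset \<Omega> (n - 1) \<Longrightarrow> K \<subseteq> X \<Longrightarrow> g ` K \<subseteq> \<sigma> X"
  shows "\<sigma> X = g ` X"
proof -
  have X: "finite X" "card X = n" "X \<subseteq> \<Omega>" using assms(3) by (auto simp: kset_def)
  have sX: "finite (\<sigma> X)" "card (\<sigma> X) = n" using assms(4) by (auto simp: kset_def)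
  have sub: "g ` X \<subseteq> \<sigma> X"
  proof
    fix z assume "z \<in> g ` X"
    then obtain x where x: "x \<in> X" "z = g x" by blast
    have "X - {x} \<noteq> {}"
    proof
      assume "X - {x} = {}"
      then have "X \<subseteq> {x}" by blast
      then have "card X \<le> 1" using card_mono[of "{x}" X] by simp
      then show False using X assms(1) by simp
    qed
    then obtain y where y: "y \<in> X" "y \<noteq> x" by blast
    define K where "K = X - {y}"
    have "card K = n - 1" using X y by (simp add: K_def)
    then have "K \<in> kset \<Omega> (n - 1)" using X by (auto simp: K_def kset_def)
    moreover have "K \<subseteq> X" "x \<in> K" using x y by (auto simp: K_def)
    ultimately show "z \<in> \<sigma> X" using assms(5) x by blast
  qed
  have "inj_on g X" using assms(2) X(3) by (auto simp: bij_betw_def intro: inj_on_subset)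
  then have "card (g ` X) = n" using X by (simp add: card_image)
  then show ?thesis using sub sX by (intro card_subset_eq[symmetric]) auto
qed

lemma johnson:
  assumes "infinite \<Omega>"
  shows "2 \<le> n \<Longrightarrow> gamma_aut \<Omega> n (n - 1) \<sigma> \<Longrightarrow> induced_by_perm \<Omega> n \<sigma>"
proof (induction n arbitrary: \<sigma> rule: less_induct)
  case (less n \<sigma>)
  let ?V = "kset \<Omega> n"
  let ?W = "kset \<Omega> (n - 1)"
  have im: "\<sigma> ` ?V = ?V" using less.prems(2) by (auto simp: gamma_aut_def bij_betw_def)
  obtain \<tau> where t1: "\<forall>K\<in>?W. \<tau> K \<in> ?W" and t2: "inj_on \<tau> ?W" and t3: "\<tau> ` ?W = ?W"
    and t4: "\<forall>K\<in>?W. \<forall>X\<in>?V. K \<subseteq> X \<longleftrightarrow> \<tau> K \<subseteq> \<sigma> X"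
    using tau_exists[OF assms _ _ less.prems(2)] less.prems(1) by auto
  have "\<exists>g. bij_betw g \<Omega> \<Omega> \<and> (\<forall>K\<in>?W. \<tau> K = g ` K)"
  proof (cases "n = 2")
    case True
    then have W: "?W = kset \<Omega> 1" by simp
    define g where "g x = the_elem (\<tau> {x})" for x
    have sing: "x \<in> \<Omega> \<Longrightarrow> {x} \<in> ?W" for x using W by (simp add: kset_def)
    have tg: "\<tau> {x} = {g x} \<and> g x \<in> \<Omega>" if "x \<in> \<Omega>" for x
    proof -
      have "\<tau> {x} \<in> kset \<Omega> 1" using t1 sing[OF that] W by simp
      then obtain y where "\<tau> {x} = {y}" "y \<in> \<Omega>" by (auto simp: kset_def card_1_singleton_iff)
      then show ?thesis by (simp add: g_def)
    qed
    have Wf: "\<exists>x\<in>\<Omega>. K = {x}" if "K \<in> ?W" for K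
    proof -
      have "K \<in> kset \<Omega> 1" using that W by simp
      then obtain x where "K = {x}" "K \<subseteq> \<Omega>" by (auto simp: kset_def card_1_singleton_iff)
      then show ?thesis by auto
    qed
    have ginj: "inj_on g \<Omega>"
    proof (rule inj_onI)
      fix x y assume "x \<in> \<Omega>" "y \<in> \<Omega>" "g x = g y"
      then have "\<tau> {x} = \<tau> {y}" using tg by simp
      then have "{x} = {y}" using t2 sing \<open>x \<in> \<Omega>\<close> \<open>y \<in> \<Omega>\<close> by (meson inj_onD)
      then show "x = y" by simp
    qed
    have gim: "g ` \<Omega> = \<Omega>"
    proof
      show "g ` \<Omega> \<subseteq> \<Omega>" using tg by blast
      show "\<Omega> \<subseteq> g ` \<Omega>"
      proof
        fix y assume "y \<in> \<Omega>"
        then have "{y} \<in> \<tau> ` ?W" using sing t3 by simp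
        then obtain K where K: "K \<in> ?W" "{y} = \<tau> K" by blast
        then obtain x where "x \<in> \<Omega>" "K = {x}" using Wf by blast
        then show "y \<in> g ` \<Omega>" using K tg by auto
      qed
    qed
    have "\<forall>K\<in>?W. \<tau> K = g ` K"
    proof
      fix K assume "K \<in> ?W"
      then obtain x where "x \<in> \<Omega>" "K = {x}" using Wf by blast
      then show "\<tau> K = g ` K" using tg by simp
    qed
    then show ?thesis using ginj gim by (auto simp: bij_betw_def)
  next
    case False
    then have n3: "3 \<le> n" using less.prems(1) by simp
    have "gamma_aut \<Omega> (n - 1) (n - 1 - 1) \<tau>"
      unfolding gamma_aut_def gamma_adj_def
    proof (intro conjI ballI)
      show "bij_betw \<tau> ?W ?W" using t2 t3 by (simp add: bij_betw_def)
      fix K L assume K: "K \<in> ?W" and L: "L \<in> ?W"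
      have TK: "\<tau> K \<in> ?W" "\<tau> L \<in> ?W" using t1 K L by auto
      have sn: "Suc (n - 1) = n" using n3 by simp
      have "card (\<tau> K \<inter> \<tau> L) = n - 1 - 1 \<longleftrightarrow>
          \<tau> K \<noteq> \<tau> L \<and> (\<exists>X\<in>?V. \<tau> K \<union> \<tau> L \<subseteq> X)"
        using adjJ[OF TK, of] n3 sn by simp
      also have "\<dots> \<longleftrightarrow> K \<noteq> L \<and> (\<exists>X\<in>?V. K \<union> L \<subseteq> X)"
      proof -
        have "\<tau> K \<noteq> \<tau> L \<longleftrightarrow> K \<noteq> L" using t2 K L by (meson inj_onD)
        moreover have "(\<exists>X\<in>?V. \<tau> K \<union> \<tau> L \<subseteq> X) \<longleftrightarrow> (\<exists>X\<in>?V. K \<union> L \<subseteq> X)"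
        proof
          assume "\<exists>X\<in>?V. \<tau> K \<union> \<tau> L \<subseteq> X"
          then obtain Z where Z: "Z \<in> ?V" "\<tau> K \<union> \<tau> L \<subseteq> Z" by blast
          then obtain X where X: "X \<in> ?V" "Z = \<sigma> X" using im by (metis imageE)
          then have "K \<subseteq> X" "L \<subseteq> X" using t4 K L Z by blast+
          then show "\<exists>X\<in>?V. K \<union> L \<subseteq> X" using X by blast
        next
          assume "\<exists>X\<in>?V. K \<union> L \<subseteq> X"
          then obtain X where X: "X \<in> ?V" "K \<union> L \<subseteq> X" by blast
          then have "\<tau> K \<subseteq> \<sigma> X" "\<tau> L \<subseteq> \<sigma> X" using t4 K L by blast+
          moreover have "\<sigma> X \<in> ?V" using X im by blast
          ultimately show "\<exists>X\<in>?V. \<tau> K \<union> \<tau> L \<subseteq> X" by blast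
        qed
        ultimately show ?thesis by simp
      qed
      also have "\<dots> \<longleftrightarrow> card (K \<inter> L) = n - 1 - 1"
        using adjJ[OF K L] n3 sn by simp
      finally show "card (\<tau> K \<inter> \<tau> L) = n - 1 - 1 \<longleftrightarrow> card (K \<inter> L) = n - 1 - 1" .
    qed
    then have "induced_by_perm \<Omega> (n - 1) \<tau>"
      using less.IH[of "n - 1" \<tau>] n3 by simp
    then show ?thesis by (simp add: induced_by_perm_def)
  qed
  then obtain g where g: "bij_betw g \<Omega> \<Omega>" "\<forall>K\<in>?W. \<tau> K = g ` K" by blast
  have "\<forall>X\<in>?V. \<sigma> X = g ` X"
  proof
    fix X assume X: "X \<in> ?V"
    have sX: "\<sigma> X \<in> ?V" using X im by blast
    show "\<sigma> X = g ` X"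
    proof (rule final_step[where \<sigma>=\<sigma>, OF less.prems(1) g(1) X sX])
      fix K assume "K \<in> ?W" "K \<subseteq> X"
      then show "g ` K \<subseteq> \<sigma> X" using t4 g(2) X by metis
    qed
  qed
  then show ?case using g(1) by (auto simp: induced_by_perm_def)
qed

theorem proposition4p3:
  fixes \<Omega> :: "'a set" and j k :: nat and \<sigma> :: "'a set \<Rightarrow> 'a set"
  assumes "infinite \<Omega>" and "0 < k" and "k < j"
    and "gamma_aut \<Omega> j k \<sigma>"
  shows "induced_by_perm \<Omega> j \<sigma>"
proof -
  have "gamma_aut \<Omega> j (j - 1) \<sigma>" using preserve_J[OF assms] .
  moreover have "2 \<le> j" using assms(2,3) by simp
  ultimately show ?thesis using johnson[OF assms(1)] by blast
qed

end
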